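(* Every quantifier-free lifted Bayesian network $\mathfrak{G}$ over a relational signature $\sigma$ induces a projective family of distributions. In particular, $\mathfrak{G}$ has an asymptotic limit.
   Context: A relational signature $\sigma$ is a set of relation symbols (possibly multi-sorted, without equality). A functional lifted Bayesian network (FLBN) over $\sigma$ consists of a directed acyclic graph $G$ with node set $\sigma$, for each $R\in\sigma$ a finite tuple $(\chi_{R,i}(\vec{x},\vec{y}))_{i\le n_R}$ of first-order formulas over the signature of the $G$-parents of $R$ ($\vec{x}$ a sort-appropriate tuple of variables of length the arity of $R$), and a continuous $f_R:[0,1]^{n_R}\to[0,1]$. On a finite domain $D$ it induces the distribution on $\sigma$-structures with domain $D$ given by the Bayesian network with nodes the ground atoms $R(\vec{a})$, edges from $R_1(\vec{b})$ to $R_2(\vec{a})$ whenever $R_1\to R_2$ in $G$, and $R(\vec{a})$ true with probability $f_R\big((\|\chi_{R,i}(\vec{a},\vec{y})\|_{\vec{y}})_i\big)$, where $\|\chi(\vec{a},\vec{y})\|_{\vec{y}}$ is the fraction of sort-appropriate tuples $\vec{b}$ for $\vec{y}$ with $\chi(\vec{a},\vec{b})$ true in the structure given by the parent values. A quantifier-free lifted Bayesian network is an FLBN in which every $\chi_{R,i}$ is quantifier-free with all variables among $\vec{x}$. Domains are taken to be initial segments of $\mathbb{N}$ in each sort, with sort sizes $\vec{n}$; write $\mathbb{P}_{\vec{n}}$ for the induced distribution. Let $\Omega_\infty$ be the set of $\sigma$-structures with every sort equal to $\mathbb{N}$, with the $\sigma$-algebra generated by the generating sets $A$: for elements $a_1,\dots,a_m$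 and a $\sigma$-structure $\mathfrak{Y}$ on $\{a_1,\dots,a_m\}$, the set of structures whose induced substructure on $\{a_1,\dots,a_m\}$ is $\mathfrak{Y}$; $\mathbb{P}_{\vec{n}}(A)$ is defined (as the probability that the induced substructure on $\{a_1,\dots,a_m\}$ is $\mathfrak{Y}$) whenever each $a_i$ lies in the domain of its sort. A family $(\mathbb{P}_{\vec{n}})$ is projective if for every generating set $A$ the sequence $\mathbb{P}_{\vec{n}}(A)$ is constant wherever defined. A probability measure $\mathbb{P}_\infty$ on $\Omega_\infty$ is the asymptotic limit of $\mathfrak{G}$ if for every sequence of domains monotone and unbounded in the cardinality of every sort and every generating set $A$, the probabilities of $A$ converge to $\mathbb{P}_\infty(A)$. *)

theory Defs
  imports "HOL-Probability.Probability"
begin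

text \<open>A signature is given by a set Sig of relation symbols (type 'r) together with
  an arity function ar assigning to each relation symbol the list of sorts (type 's)
  of its argument places. Variables are pairs (sort, index); the sort of a variable
  is its first component. Domains are initial segments of the naturals in each sort,
  given by a size function n :: 's => nat; elements are natural numbers.\<close>

datatype ('s, 'r) fm =
    TT
  | Atom 'r "('s \<times> nat) list"
  | Neg "('s, 'r) fm"
  | Conj "('s, 'r) fm" "('s, 'r) fm"
  | Exists "'s \<times> nat" "('s, 'r) fm"

fun fv :: "('s, 'r) fm \<Rightarrow> ('s \<times> nat) set" where
  "fv TT = {}"
| "fv (Atom R vs) = set vs"
| "fv (Neg \<phi>) = fv \<phi>"
| "fv (Conj \<phi> \<psi>) = fv \<phi> \<union> fv \<psi>"
| "fv (Exists v \<phi>) = fv \<phi> - {v}"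

fun rels :: "('s, 'r) fm \<Rightarrow> 'r set" where
  "rels TT = {}"
| "rels (Atom R vs) = {R}"
| "rels (Neg \<phi>) = rels \<phi>"
| "rels (Conj \<phi> \<psi>) = rels \<phi> \<union> rels \<psi>"
| "rels (Exists v \<phi>) = rels \<phi>"

fun wf_fm :: "('r \<Rightarrow> 's list) \<Rightarrow> ('s, 'r) fm \<Rightarrow> bool" where
  "wf_fm ar TT = True"
| "wf_fm ar (Atom R vs) = (map fst vs = ar R)"
| "wf_fm ar (Neg \<phi>) = wf_fm ar \<phi>"
| "wf_fm ar (Conj \<phi> \<psi>) = (wf_fm ar \<phi> \<and> wf_fm ar \<psi>)"
| "wf_fm ar (Exists v \<phi>) = wf_fm ar \<phi>"

fun qfree :: "('s, 'r) fm \<Rightarrow> bool" where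
  "qfree TT = True"
| "qfree (Atom R vs) = True"
| "qfree (Neg \<phi>) = qfree \<phi>"
| "qfree (Conj \<phi> \<psi>) = (qfree \<phi> \<and> qfree \<psi>)"
| "qfree (Exists v \<phi>) = False"

fun sat :: "('s \<Rightarrow> nat) \<Rightarrow> ('r \<Rightarrow> nat list \<Rightarrow> bool) \<Rightarrow> ('s \<times> nat \<Rightarrow> nat)
            \<Rightarrow> ('s, 'r) fm \<Rightarrow> bool" where
  "sat n \<omega> \<rho> TT = True"
| "sat n \<omega> \<rho> (Atom R vs) = \<omega> R (map \<rho> vs)"
| "sat n \<omega> \<rho> (Neg \<phi>) = (\<not> sat n \<omega> \<rho> \<phi>)"
| "sat n \<omega> \<rho> (Conj \<phi> \<psi>) = (sat n \<omega> \<rho> \<phi> \<and> sat n \<omega> \<rho> \<psi>)"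
| "sat n \<omega> \<rho> (Exists v \<phi>) = (\<exists>a < n (fst v). sat n \<omega> (\<rho>(v := a)) \<phi>)"

definition xvars :: "('r \<Rightarrow> 's list) \<Rightarrow> 'r \<Rightarrow> ('s \<times> nat) list" where
  "xvars ar R = map (\<lambda>j. (ar R ! j, j)) [0..<length (ar R)]"

text \<open>An FLBN: a DAG on Sig (edges (P, R) meaning P is a parent of R), for each R a
  finite list of pairs (ys, chi) representing chi(x, y) with y the list ys of
  variables, and a combination function f R. A vector of n reals is encoded as a
  function nat => real vanishing from n on.\<close>
record ('s, 'r) flbn =
  edges :: "('r \<times> 'r) set"
  chis  :: "'r \<Rightarrow> (('s \<times> nat) list \<times> ('s, 'r) fm) list"
  comb  :: "'r \<Rightarrow> (nat \<Rightarrow> real) \<Rightarrow> real"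

definition cube :: "nat \<Rightarrow> (nat \<Rightarrow> real) set" where
  "cube k = {v. (\<forall>i<k. v i \<in> {0..1}) \<and> (\<forall>i\<ge>k. v i = 0)}"

definition parents :: "('s, 'r) flbn \<Rightarrow> 'r \<Rightarrow> 'r set" where
  "parents G R = {P. (P, R) \<in> edges G}"

definition is_flbn :: "'r set \<Rightarrow> ('r \<Rightarrow> 's list) \<Rightarrow> ('s, 'r) flbn \<Rightarrow> bool" where
  "is_flbn Sig ar G \<longleftrightarrow>
     finite Sig \<and> edges G \<subseteq> Sig \<times> Sig \<and> acyclic (edges G) \<and>
     (\<forall>R\<in>Sig.
        (\<forall>(ys, chi) \<in> set (chis G R).
            wf_fm ar chi \<and> rels chi \<subseteq> parents G R \<and> distinct ys \<and>
            set ys \<inter> set (xvars ar R) = {} \<and>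
            fv chi \<subseteq> set (xvars ar R) \<union> set ys) \<and>
        continuous_on (cube (length (chis G R))) (comb G R) \<and>
        comb G R ` cube (length (chis G R)) \<subseteq> {0..1})"

definition is_qf_lbn :: "'r set \<Rightarrow> ('r \<Rightarrow> 's list) \<Rightarrow> ('s, 'r) flbn \<Rightarrow> bool" where
  "is_qf_lbn Sig ar G \<longleftrightarrow> is_flbn Sig ar G \<and>
     (\<forall>R\<in>Sig. \<forall>(ys, chi) \<in> set (chis G R). ys = [] \<and> qfree chi \<and> fv chi \<subseteq> set (xvars ar R))"

definition sorted_tuples :: "('s \<Rightarrow> nat) \<Rightarrow> 's list \<Rightarrow> nat list set" where
  "sorted_tuples n ss = {t. length t = length ss \<and> (\<forall>j<length t. t ! j < n (ss ! j))}"

text \<open>Structures with domain given by n (canonically false outside Sig / the domain).\<close>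
definition fin_structs :: "'r set \<Rightarrow> ('r \<Rightarrow> 's list) \<Rightarrow> ('s \<Rightarrow> nat)
                           \<Rightarrow> ('r \<Rightarrow> nat list \<Rightarrow> bool) set" where
  "fin_structs Sig ar n =
     {\<omega>. \<forall>R t. \<omega> R t \<longrightarrow> R \<in> Sig \<and> t \<in> sorted_tuples n (ar R)}"

definition env_of :: "('s \<times> nat) list \<Rightarrow> nat list \<Rightarrow> ('s \<times> nat \<Rightarrow> nat)" where
  "env_of vs as = (\<lambda>v. case map_of (zip vs as) v of Some a \<Rightarrow> a | None \<Rightarrow> 0)"

definition frac :: "('r \<Rightarrow> 's list) \<Rightarrow> ('s \<Rightarrow> nat) \<Rightarrow> ('r \<Rightarrow> nat list \<Rightarrow> bool) \<Rightarrow> 'r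
                    \<Rightarrow> nat list \<Rightarrow> ('s \<times> nat) list \<times> ('s, 'r) fm \<Rightarrow> real" where
  "frac ar n \<omega> R a c =
     (let ys = fst c; chi = snd c; B = sorted_tuples n (map fst ys) in
      real (card {b \<in> B. sat n \<omega> (env_of (xvars ar R @ ys) (a @ b)) chi}) / real (card B))"

definition cond_prob :: "('r \<Rightarrow> 's list) \<Rightarrow> ('s, 'r) flbn \<Rightarrow> ('s \<Rightarrow> nat)
                         \<Rightarrow> ('r \<Rightarrow> nat list \<Rightarrow> bool) \<Rightarrow> 'r \<Rightarrow> nat list \<Rightarrow> real" where
  "cond_prob ar G n \<omega> R a =
     comb G R (\<lambda>i. if i < length (chis G R) then frac ar n \<omega> R a (chis G R ! i) else 0)"

definition weight :: "'r set \<Rightarrow> ('r \<Rightarrow> 's list) \<Rightarrow> ('s, 'r) flbn \<Rightarrow> ('s \<Rightarrow> nat)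
                      \<Rightarrow> ('r \<Rightarrow> nat list \<Rightarrow> bool) \<Rightarrow> real" where
  "weight Sig ar G n \<omega> =
     (\<Prod>R\<in>Sig. \<Prod>a\<in>sorted_tuples n (ar R).
        if \<omega> R a then cond_prob ar G n \<omega> R a else 1 - cond_prob ar G n \<omega> R a)"

definition tuple_in :: "('r \<Rightarrow> 's list) \<Rightarrow> ('s \<times> nat) set \<Rightarrow> 'r \<Rightarrow> nat list \<Rightarrow> bool" where
  "tuple_in ar A R t \<longleftrightarrow> length t = length (ar R) \<and> (\<forall>j<length t. (ar R ! j, t ! j) \<in> A)"

text \<open>Omega-infinity: sigma-structures with every sort equal to the naturals.\<close>
definition Omega_inf :: "'r set \<Rightarrow> ('r \<Rightarrow> 's list) \<Rightarrow> ('r \<Rightarrow> nat list \<Rightarrow> bool) set" where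
  "Omega_inf Sig ar = {\<omega>. \<forall>R t. \<omega> R t \<longrightarrow> R \<in> Sig \<and> length t = length (ar R)}"

text \<open>The generating set for elements A and structure Y on A: the induced substructure
  on A is Y (only the values of Y on tuples from A matter).\<close>
definition agrees_on :: "'r set \<Rightarrow> ('r \<Rightarrow> 's list) \<Rightarrow> ('s \<times> nat) set
                         \<Rightarrow> ('r \<Rightarrow> nat list \<Rightarrow> bool) \<Rightarrow> ('r \<Rightarrow> nat list \<Rightarrow> bool) \<Rightarrow> bool" where
  "agrees_on Sig ar A Y \<omega> \<longleftrightarrow> (\<forall>R\<in>Sig. \<forall>t. tuple_in ar A R t \<longrightarrow> \<omega> R t = Y R t)"

definition gen_set :: "'r set \<Rightarrow> ('r \<Rightarrow> 's list) \<Rightarrow> ('s \<times> nat) set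
                       \<Rightarrow> ('r \<Rightarrow> nat list \<Rightarrow> bool) \<Rightarrow> ('r \<Rightarrow> nat list \<Rightarrow> bool) set" where
  "gen_set Sig ar A Y = {\<omega> \<in> Omega_inf Sig ar. agrees_on Sig ar A Y \<omega>}"

definition gen_sets :: "'r set \<Rightarrow> ('r \<Rightarrow> 's list) \<Rightarrow> ('r \<Rightarrow> nat list \<Rightarrow> bool) set set" where
  "gen_sets Sig ar = {gen_set Sig ar A Y | A Y. finite A}"

definition prob_n :: "'r set \<Rightarrow> ('r \<Rightarrow> 's list) \<Rightarrow> ('s, 'r) flbn \<Rightarrow> ('s \<Rightarrow> nat)
                      \<Rightarrow> ('s \<times> nat) set \<Rightarrow> ('r \<Rightarrow> nat list \<Rightarrow> bool) \<Rightarrow> real" where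
  "prob_n Sig ar G n A Y =
     (\<Sum>\<omega> \<in> {\<omega> \<in> fin_structs Sig ar n. agrees_on Sig ar A Y \<omega>}. weight Sig ar G n \<omega>)"

definition in_domain :: "('s \<Rightarrow> nat) \<Rightarrow> ('s \<times> nat) set \<Rightarrow> bool" where
  "in_domain n A \<longleftrightarrow> (\<forall>(s, a) \<in> A. a < n s)"

definition projective :: "'r set \<Rightarrow> ('r \<Rightarrow> 's list) \<Rightarrow> ('s, 'r) flbn \<Rightarrow> bool" where
  "projective Sig ar G \<longleftrightarrow>
     (\<forall>A Y n n'. finite A \<longrightarrow> in_domain n A \<longrightarrow> in_domain n' A \<longrightarrow>
        prob_n Sig ar G n A Y = prob_n Sig ar G n' A Y)"

definition is_asymptotic_limit ::
  "'r set \<Rightarrow> ('r \<Rightarrow> 's list) \<Rightarrow> ('s, 'r) flbn \<Rightarrow> ('r \<Rightarrow> nat list \<Rightarrow> bool) measure \<Rightarrow> bool" where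
  "is_asymptotic_limit Sig ar G M \<longleftrightarrow>
     prob_space M \<and> space M = Omega_inf Sig ar \<and>
     sets M = sigma_sets (Omega_inf Sig ar) (gen_sets Sig ar) \<and>
     (\<forall>seq :: nat \<Rightarrow> 's \<Rightarrow> nat.
        (\<forall>s. incseq (\<lambda>k. seq k s)) \<longrightarrow> (\<forall>s. \<forall>B. \<exists>k. B \<le> seq k s) \<longrightarrow>
        (\<forall>A Y. finite A \<longrightarrow>
           (\<lambda>k. prob_n Sig ar G (seq k) A Y) \<longlonglongrightarrow> measure M (gen_set Sig ar A Y)))"

end

theory Submission
  imports Defs
begin


definition dep_on :: "('i \<Rightarrow> bool) set \<Rightarrow> 'i set \<Rightarrow> bool" where
  "dep_on E J \<longleftrightarrow> (\<forall>x z. (\<forall>i\<in>J. x i = z i) \<longrightarrow> (x \<in> E \<longleftrightarrow> z \<in> E))"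

definition box :: "'i set \<Rightarrow> 'i set \<Rightarrow> ('i \<Rightarrow> bool) set" where
  "box J S = {x. \<forall>i\<in>J. x i = (i \<in> S)}"

abbreviation Om :: "('i \<Rightarrow> bool pmf) \<Rightarrow> ('i \<Rightarrow> bool) measure" where
  "Om p \<equiv> PiM UNIV (\<lambda>i. measure_pmf (p i))"

lemma space_Om[simp]: "space (Om p) = UNIV"
  by (auto simp: space_PiM PiE_def extensional_def)

lemma prob_space_Om: "prob_space (Om p)"
  by (rule prob_space_PiM) (simp add: prob_space_measure_pmf)

lemma box_measure:
  assumes "finite J"
  shows "measure (Om p) {x. \<forall>i\<in>J. x i = y i} = (\<Prod>i\<in>J. pmf (p i) (y i))"
proof -
  interpret product_prob_space "\<lambda>i. measure_pmf (p i)" UNIV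
    by unfold_locales
  have "emeasure (Om p) {x\<in>space (Om p). \<forall>i\<in>J. x i \<in> {y i}} = (\<Prod> i\<in>J. emeasure (measure_pmf (p i)) {y i})"
    by (rule emeasure_PiM_Collect) (use assms in auto)
  also have "{x\<in>space (Om p). \<forall>i\<in>J. x i \<in> {y i}} = {x. \<forall>i\<in>J. x i = y i}"
    by simp
  also have "(\<Prod> i\<in>J. emeasure (measure_pmf (p i)) {y i}) = (\<Prod>i\<in>J. ennreal (pmf (p i) (y i)))"
    by (rule prod.cong[OF refl]) (rule emeasure_pmf_single)
  also have "\<dots> = ennreal (\<Prod>i\<in>J. pmf (p i) (y i))"
    by (rule prod_ennreal) (rule pmf_nonneg)
  finally have e: "emeasure (Om p) {x. \<forall>i\<in>J. x i = y i} = ennreal (\<Prod>i\<in>J. pmf (p i) (y i))" .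
  show ?thesis
    unfolding measure_def e by (rule enn2real_ennreal) (rule prod_nonneg, rule pmf_nonneg)
qed

lemma single_sets: "{x. x i = b} \<in> sets (Om p)"
proof -
  have "(\<lambda>x. x i) \<in> measurable (Om p) (measure_pmf (p i))"
    by (rule measurable_component_singleton) simp
  then have "(\<lambda>x. x i) -` {b} \<inter> space (Om p) \<in> sets (Om p)"
    by (rule measurable_sets) simp
  moreover have "(\<lambda>x. x i) -` {b} \<inter> space (Om p) = {x. x i = b}"
    by auto
  ultimately show ?thesis by simp
qed

lemma box_sets:
  assumes "finite J"
  shows "box J S \<in> sets (Om p)"
  using assms
proof (induction J rule: finite_induct)
  case empty
  have "box {} S = space (Om p)" by (simp add: box_def)
  then show ?case using sets.top[of "Om p"] by simp
next
  case (insert j J)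
  have "box (insert j J) S = {x. x j = (j \<in> S)} \<inter> box J S"
    by (auto simp: box_def)
  then show ?case using insert.IH single_sets by simp
qed

lemma dep_onD: "dep_on E J \<Longrightarrow> (\<forall>i\<in>J. x i = z i) \<Longrightarrow> (x \<in> E) = (z \<in> E)"
  unfolding dep_on_def by blast

lemma dep_decomp:
  assumes d: "dep_on E J"
  shows "E = (\<Union>S\<in>{S. S \<subseteq> J \<and> (\<lambda>i. i \<in> S) \<in> E}. box J S)"
proof (intro equalityI subsetI)
  fix x assume x: "x \<in> E"
  have "\<forall>i\<in>J. (i \<in> {j\<in>J. x j}) = x i" by blast
  then have "((\<lambda>i. i \<in> {j\<in>J. x j}) \<in> E) = (x \<in> E)" by (rule dep_onD[OF d])
  then have 1: "(\<lambda>i. i \<in> {j\<in>J. x j}) \<in> E" using x by simp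
  have 2: "x \<in> box J {j\<in>J. x j}" by (auto simp: box_def)
  show "x \<in> (\<Union>S\<in>{S. S \<subseteq> J \<and> (\<lambda>i. i \<in> S) \<in> E}. box J S)"
    by (rule UN_I[of "{j\<in>J. x j}"]) (use 1 2 in auto)
next
  fix x assume "x \<in> (\<Union>S\<in>{S. S \<subseteq> J \<and> (\<lambda>i. i \<in> S) \<in> E}. box J S)"
  then obtain S where S: "(\<lambda>i. i \<in> S) \<in> E" "x \<in> box J S" by blast
  have "\<forall>i\<in>J. x i = (i \<in> S)" using S(2) by (simp add: box_def)
  then have "(x \<in> E) = ((\<lambda>i. i \<in> S) \<in> E)" by (rule dep_onD[OF d])
  then show "x \<in> E" using S(1) by simp
qed

lemma dep_sets:
  assumes "finite J" "dep_on E J"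
  shows "E \<in> sets (Om p)"
proof -
  have "(\<Union>S\<in>{S. S \<subseteq> J \<and> (\<lambda>i. i \<in> S) \<in> E}. box J S) \<in> sets (Om p)"
    using assms(1) by (intro sets.finite_UN box_sets) auto
  with dep_decomp[OF assms(2)] show ?thesis by simp
qed

lemma indep_single:
  assumes "finite J" "dep_on E J" "i0 \<notin> J"
  shows "measure (Om p) (E \<inter> {x. x i0 = b}) = measure (Om p) E * pmf (p i0) b"
proof -
  interpret P: prob_space "Om p" by (rule prob_space_Om)
  let ?F = "{S. S \<subseteq> J \<and> (\<lambda>i. i \<in> S) \<in> E}"
  have finF: "finite ?F" using assms(1) by (rule finite_subset[rotated, OF finite_Pow_iff[THEN iffD2]]) auto
  have disj: "disjoint_family_on (box J) ?F"
    unfolding disjoint_family_on_def box_def by auto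
  have disj2: "disjoint_family_on (\<lambda>S. box J S \<inter> {x. x i0 = b}) ?F"
    unfolding disjoint_family_on_def box_def by auto
  have bx: "box J S \<inter> {x. x i0 = b} = {x. \<forall>i\<in>insert i0 J. x i = (if i = i0 then b else i \<in> S)}" for S
    using assms(3) by (auto simp: box_def)
  have mb: "measure (Om p) (box J S) = (\<Prod>i\<in>J. pmf (p i) (i \<in> S))" for S
    unfolding box_def by (rule box_measure[OF assms(1)])
  have mb2: "measure (Om p) (box J S \<inter> {x. x i0 = b}) = pmf (p i0) b * (\<Prod>i\<in>J. pmf (p i) (i \<in> S))" for S
  proof -
    have "measure (Om p) (box J S \<inter> {x. x i0 = b}) =
          (\<Prod>i\<in>insert i0 J. pmf (p i) (if i = i0 then b else i \<in> S))"
      unfolding bx by (rule box_measure) (use assms(1) in auto)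
    also have "\<dots> = pmf (p i0) b * (\<Prod>i\<in>J. pmf (p i) (if i = i0 then b else i \<in> S))"
      using assms(1,3) by (simp add: prod.insert)
    also have "(\<Prod>i\<in>J. pmf (p i) (if i = i0 then b else i \<in> S)) = (\<Prod>i\<in>J. pmf (p i) (i \<in> S))"
      using assms(3) by (intro prod.cong) auto
    finally show ?thesis .
  qed
  have single: "{x. x i0 = b} \<in> sets (Om p)"
    by (rule single_sets)
  have "E \<inter> {x. x i0 = b} = (\<Union>S\<in>?F. box J S \<inter> {x. x i0 = b})"
    using dep_decomp[OF assms(2)] by blast
  then have "measure (Om p) (E \<inter> {x. x i0 = b}) = measure (Om p) (\<Union>S\<in>?F. box J S \<inter> {x. x i0 = b})"
    by simp
  also have "\<dots> = (\<Sum>S\<in>?F. measure (Om p) (box J S \<inter> {x. x i0 = b}))"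
    by (rule P.finite_measure_finite_Union[OF finF _ disj2]) (use box_sets[OF assms(1)] single in auto)
  also have "\<dots> = (\<Sum>S\<in>?F. pmf (p i0) b * measure (Om p) (box J S))"
    by (simp add: mb mb2)
  also have "\<dots> = pmf (p i0) b * measure (Om p) (\<Union>S\<in>?F. box J S)"
    using finF disj box_sets[OF assms(1)]
    by (subst P.finite_measure_finite_Union) (auto simp: sum_distrib_left)
  also have "(\<Union>S\<in>?F. box J S) = E" using dep_decomp[OF assms(2)] by simp
  finally show ?thesis by simp
qed



fun atoms :: "('s, 'r) fm \<Rightarrow> ('r \<times> ('s \<times> nat) list) set" where
  "atoms TT = {}"
| "atoms (Atom R vs) = {(R, vs)}"
| "atoms (Neg \<phi>) = atoms \<phi>"
| "atoms (Conj \<phi> \<psi>) = atoms \<phi> \<union> atoms \<psi>"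
| "atoms (Exists v \<phi>) = atoms \<phi>"

lemma sat_qf_agree:
  "qfree \<phi> \<Longrightarrow> (\<forall>(P, vs)\<in>atoms \<phi>. \<omega> P (map \<rho> vs) = \<omega>' P (map \<rho> vs)) \<Longrightarrow>
   sat n \<omega> \<rho> \<phi> = sat n' \<omega>' \<rho> \<phi>"
  by (induction \<phi>) auto

lemma atoms_props:
  "qfree \<phi> \<Longrightarrow> (P, vs) \<in> atoms \<phi> \<Longrightarrow> P \<in> rels \<phi> \<and> (wf_fm ar \<phi> \<longrightarrow> map fst vs = ar P) \<and> set vs \<subseteq> fv \<phi>"
  by (induction \<phi>) auto

lemma xvars_nth: "k < length (ar R) \<Longrightarrow> xvars ar R ! k = (ar R ! k, k)"
  by (simp add: xvars_def)

lemma length_xvars[simp]: "length (xvars ar R) = length (ar R)"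
  by (simp add: xvars_def)

lemma distinct_xvars: "distinct (xvars ar R)"
  by (auto simp: xvars_def distinct_map inj_on_def)

lemma set_xvars: "set (xvars ar R) = {(ar R ! k, k) | k. k < length (ar R)}"
  by (auto simp: xvars_def)

lemma env_xvars:
  assumes "length t = length (ar R)" "k < length (ar R)"
  shows "env_of (xvars ar R) t (ar R ! k, k) = t ! k"
proof -
  have "map_of (zip (xvars ar R) t) (xvars ar R ! k) = Some (t ! k)"
    by (rule map_of_zip_nth) (use assms distinct_xvars in auto)
  then show ?thesis using assms by (simp add: env_of_def xvars_nth)
qed

locale qlbn =
  fixes Sig :: "'r set" and ar :: "'r \<Rightarrow> 's list" and G :: "('s, 'r) flbn"
  assumes qf: "is_qf_lbn Sig ar G"
begin

definition vec :: "('r \<Rightarrow> nat list \<Rightarrow> bool) \<Rightarrow> 'r \<Rightarrow> nat list \<Rightarrow> bool list" where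
  "vec \<omega> R t = map (\<lambda>c. sat (\<lambda>_. 0) \<omega> (env_of (xvars ar R) t) (snd c)) (chis G R)"

definition bv :: "bool list \<Rightarrow> nat \<Rightarrow> real" where
  "bv v i = (if i < length v \<and> v ! i then 1 else 0)"

definition cc :: "('r \<Rightarrow> nat list \<Rightarrow> bool) \<Rightarrow> 'r \<Rightarrow> nat list \<Rightarrow> real" where
  "cc \<omega> R t = comb G R (bv (vec \<omega> R t))"

definition qp :: "'r \<times> nat list \<times> bool list \<Rightarrow> bool pmf" where
  "qp i = (case i of (R, t, v) \<Rightarrow> bernoulli_pmf (comb G R (bv v)))"

definition deps :: "'r \<Rightarrow> nat list \<Rightarrow> 'r \<Rightarrow> nat list \<Rightarrow> bool" where
  "deps R t P b \<longleftrightarrow> (P, R) \<in> edges G \<and> length b = length (ar P) \<and>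
     (\<forall>j<length b. (ar P ! j, b ! j) \<in> set (zip (ar R) t))"

definition closed :: "('r \<times> nat list) set \<Rightarrow> bool" where
  "closed T \<longleftrightarrow> (\<forall>(R, t)\<in>T. R \<in> Sig \<and> length t = length (ar R) \<and> (\<forall>P b. deps R t P b \<longrightarrow> (P, b) \<in> T))"

definition W :: "('r \<times> nat list) set \<Rightarrow> ('r \<Rightarrow> nat list \<Rightarrow> bool) \<Rightarrow> real" where
  "W T \<omega> = (\<Prod>(R, t)\<in>T. if \<omega> R t then cc \<omega> R t else 1 - cc \<omega> R t)"

definition Phi :: "('r \<times> nat list \<times> bool list \<Rightarrow> bool) \<Rightarrow> 'r \<Rightarrow> nat list \<Rightarrow> bool" where
  "Phi x = wfrec (edges G) (\<lambda>g R t. R \<in> Sig \<and> length t = length (ar R) \<and> x (R, t, vec g R t))"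

definition Ev :: "('r \<times> nat list) set \<Rightarrow> ('r \<Rightarrow> nat list \<Rightarrow> bool) \<Rightarrow> ('r \<times> nat list \<times> bool list \<Rightarrow> bool) set" where
  "Ev T \<omega>0 = {x. \<forall>(R, t)\<in>T. Phi x R t = \<omega>0 R t}"

definition JT :: "('r \<times> nat list) set \<Rightarrow> ('r \<times> nat list \<times> bool list) set" where
  "JT T = {(R, t, v). (R, t) \<in> T \<and> length v = length (chis G R)}"

lemma flbn: "is_flbn Sig ar G" using qf by (simp add: is_qf_lbn_def)

lemma finite_Sig: "finite Sig" using flbn by (simp add: is_flbn_def)

lemma edges_sub: "edges G \<subseteq> Sig \<times> Sig" using flbn by (simp add: is_flbn_def)

lemma wfE: "wf (edges G)"
proof (rule finite_acyclic_wf)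
  show "finite (edges G)" using finite_subset[OF edges_sub] finite_Sig by auto
  show "acyclic (edges G)" using flbn by (simp add: is_flbn_def)
qed

lemma wfE': "wf ((edges G)\<inverse>)"
proof (rule finite_acyclic_wf_converse)
  show "finite (edges G)" using finite_subset[OF edges_sub] finite_Sig by auto
  show "acyclic (edges G)" using flbn by (simp add: is_flbn_def)
qed

lemma qfA: "\<forall>R\<in>Sig. \<forall>(ys, chi)\<in>set (chis G R). ys = [] \<and> qfree chi \<and> fv chi \<subseteq> set (xvars ar R)"
  using qf unfolding is_qf_lbn_def by (elim conjE)

lemma flbnB: "\<forall>R\<in>Sig. (\<forall>(ys, chi)\<in>set (chis G R).
            wf_fm ar chi \<and> rels chi \<subseteq> parents G R \<and> distinct ys \<and>
            set ys \<inter> set (xvars ar R) = {} \<and>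
            fv chi \<subseteq> set (xvars ar R) \<union> set ys) \<and>
        continuous_on (cube (length (chis G R))) (comb G R) \<and>
        comb G R ` cube (length (chis G R)) \<subseteq> {0..1}"
  using flbn unfolding is_flbn_def by (elim conjE)

lemma chi_props:
  assumes R: "R \<in> Sig" and c: "c \<in> set (chis G R)"
  shows "fst c = [] \<and> qfree (snd c) \<and> fv (snd c) \<subseteq> set (xvars ar R) \<and> wf_fm ar (snd c) \<and>
         rels (snd c) \<subseteq> parents G R"
proof -
  obtain ys chi where c': "c = (ys, chi)" by (cases c)
  have 1: "ys = [] \<and> qfree chi \<and> fv chi \<subseteq> set (xvars ar R)"
    using bspec[OF bspec[OF qfA R] c[unfolded c']] by simp
  have 2: "wf_fm ar chi \<and> rels chi \<subseteq> parents G R"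
    using bspec[OF conjunct1[OF bspec[OF flbnB R]] c[unfolded c']] by simp
  show ?thesis using 1 2 c' by simp
qed

lemma closedD1: "closed T \<Longrightarrow> (R, t) \<in> T \<Longrightarrow> R \<in> Sig"
  unfolding closed_def by blast

lemma closedD2: "closed T \<Longrightarrow> (R, t) \<in> T \<Longrightarrow> length t = length (ar R)"
  unfolding closed_def by blast

lemma closedD3: "closed T \<Longrightarrow> (R, t) \<in> T \<Longrightarrow> deps R t P b \<Longrightarrow> (P, b) \<in> T"
  unfolding closed_def by blast

lemma length_vec[simp]: "length (vec \<omega> R t) = length (chis G R)"
  by (simp add: vec_def)

lemma vec_agree:
  assumes R: "R \<in> Sig" and len: "length t = length (ar R)"
    and ag: "\<And>P b. deps R t P b \<Longrightarrow> \<omega> P b = \<omega>' P b"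
  shows "vec \<omega> R t = vec \<omega>' R t"
proof -
  have *: "sat (\<lambda>_. 0) \<omega> (env_of (xvars ar R) t) (snd c) = sat (\<lambda>_. 0) \<omega>' (env_of (xvars ar R) t) (snd c)"
    if c: "c \<in> set (chis G R)" for c
  proof -
  note cp = chi_props[OF R c]
  let ?\<rho> = "env_of (xvars ar R) t"
  show ?thesis
  proof (rule sat_qf_agree)
    show "qfree (snd c)" using cp by simp
    have "\<omega> P (map ?\<rho> vs) = \<omega>' P (map ?\<rho> vs)" if a: "(P, vs) \<in> atoms (snd c)" for P vs
    proof -
      note ap = atoms_props[OF _ a, of ar]
      have "deps R t P (map ?\<rho> vs)"
        unfolding deps_def
      proof (intro conjI allI impI)
        show "(P, R) \<in> edges G" using ap cp by (auto simp: parents_def)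
        have mf: "map fst vs = ar P" using ap cp by auto
        then show "length (map ?\<rho> vs) = length (ar P)" by (metis length_map)
        fix j assume j: "j < length (map ?\<rho> vs)"
        then have "vs ! j \<in> set (xvars ar R)" using ap cp by (auto dest!: nth_mem)
        then obtain k where k: "k < length (ar R)" "vs ! j = (ar R ! k, k)"
          by (auto simp: set_xvars)
        have "ar P ! j = ar R ! k" using mf j k by (metis fst_conv length_map nth_map)
        moreover have "map ?\<rho> vs ! j = t ! k" using j k env_xvars[of t ar R k, OF len k(1)] by simp
        ultimately show "(ar P ! j, map ?\<rho> vs ! j) \<in> set (zip (ar R) t)"
          using k len by (auto simp: set_zip)
      qed
      then show "\<omega> P (map ?\<rho> vs) = \<omega>' P (map ?\<rho> vs)" by (rule ag)
    qed
    then show "\<forall>(P, vs)\<in>atoms (snd c). \<omega> P (map ?\<rho> vs) = \<omega>' P (map ?\<rho> vs)" by blast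
  qed
  qed
  then show ?thesis unfolding vec_def by (intro map_cong) auto
qed

lemma Phi_eq: "Phi x R t = (R \<in> Sig \<and> length t = length (ar R) \<and> x (R, t, vec (Phi x) R t))"
proof -
  have "Phi x R t = (R \<in> Sig \<and> length t = length (ar R) \<and> x (R, t, vec (cut (Phi x) (edges G) R) R t))"
    unfolding Phi_def by (subst wfrec[OF wfE]) simp
  also have "\<dots> = (R \<in> Sig \<and> length t = length (ar R) \<and> x (R, t, vec (Phi x) R t))"
  proof (cases "R \<in> Sig \<and> length t = length (ar R)")
    case True
    have "vec (cut (Phi x) (edges G) R) R t = vec (Phi x) R t"
      by (rule vec_agree) (use True in \<open>auto simp: deps_def cut_apply\<close>)
    then show ?thesis by simp
  qed auto
  finally show ?thesis .
qed

lemma bv_cube: "length v = k \<Longrightarrow> bv v \<in> cube k"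
  by (auto simp: bv_def cube_def)

lemma comb_range: "R \<in> Sig \<Longrightarrow> length v = length (chis G R) \<Longrightarrow> comb G R (bv v) \<in> {0..1}"
proof -
  assume R: "R \<in> Sig" and len: "length v = length (chis G R)"
  have "comb G R ` cube (length (chis G R)) \<subseteq> {0..1}" using bspec[OF flbnB R] by (elim conjE)
  moreover have "bv v \<in> cube (length (chis G R))" using bv_cube[OF len] .
  ultimately show ?thesis by blast
qed

lemma cc_range: "R \<in> Sig \<Longrightarrow> 0 \<le> cc \<omega> R t \<and> cc \<omega> R t \<le> 1"
  using comb_range[of R "vec \<omega> R t"] by (simp add: cc_def)

lemma Phi_dep:
  assumes cl: "closed T" and ag: "\<forall>i\<in>JT T. x i = z i"
  shows "(R, t) \<in> T \<Longrightarrow> Phi x R t = Phi z R t"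
proof (induction R arbitrary: t rule: wf_induct_rule[OF wfE])
  case (1 R)
  have R: "R \<in> Sig" "length t = length (ar R)" using closedD1[OF cl 1(2)] closedD2[OF cl 1(2)] by auto
  have "vec (Phi x) R t = vec (Phi z) R t"
  proof (rule vec_agree[OF R])
    fix P b assume d: "deps R t P b"
    then have "(P, b) \<in> T" using closedD3[OF cl 1(2)] by blast
    moreover have "(P, R) \<in> edges G" using d by (simp add: deps_def)
    ultimately show "Phi x P b = Phi z P b" using 1(1) by blast
  qed
  moreover have "x (R, t, vec (Phi z) R t) = z (R, t, vec (Phi z) R t)"
    using ag 1(2) by (auto simp: JT_def)
  ultimately show ?case by (subst (1 2) Phi_eq) simp
qed

lemma finite_bool_lists: "finite {v::bool list. length v = n}"
  using finite_lists_length_eq[of "UNIV::bool set" n] by simp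

lemma finite_JT: "finite T \<Longrightarrow> finite (JT T)"
proof -
  assume fT: "finite T"
  have "JT T \<subseteq> (\<lambda>(Rt, v). (fst Rt, snd Rt, v)) ` (SIGMA Rt:T. {v. length v = length (chis G (fst Rt))})"
  proof
    fix i assume "i \<in> JT T"
    then obtain R t v where i: "i = (R, t, v)" "(R, t) \<in> T" "length v = length (chis G R)"
      by (auto simp: JT_def)
    show "i \<in> (\<lambda>(Rt, v). (fst Rt, snd Rt, v)) ` (SIGMA Rt:T. {v. length v = length (chis G (fst Rt))})"
      by (rule image_eqI[of _ _ "((R, t), v)"]) (use i in auto)
  qed
  moreover have "finite (SIGMA Rt:T. {v::bool list. length v = length (chis G (fst Rt))})"
    using fT finite_bool_lists by (rule finite_SigmaI)
  ultimately show ?thesis by (rule finite_subset[OF _ finite_imageI])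
qed

lemma Ev_dep: "closed T \<Longrightarrow> dep_on (Ev T \<omega>0) (JT T)"
  unfolding dep_on_def Ev_def using Phi_dep by blast

lemma EvD: "x \<in> Ev T \<omega>0 \<Longrightarrow> (R, t) \<in> T \<Longrightarrow> Phi x R t = \<omega>0 R t"
  unfolding Ev_def by blast

lemma EvI: "(\<And>R t. (R, t) \<in> T \<Longrightarrow> Phi x R t = \<omega>0 R t) \<Longrightarrow> x \<in> Ev T \<omega>0"
  unfolding Ev_def by blast

lemma Phi_v: "R \<in> Sig \<Longrightarrow> length t = length (ar R) \<Longrightarrow> vec (Phi x) R t = v \<Longrightarrow> Phi x R t = x (R, t, v)"
  by (subst Phi_eq) simp

lemma pmf_qp: "R \<in> Sig \<Longrightarrow> pmf (qp (R, t, vec \<omega> R t)) b = (if b then cc \<omega> R t else 1 - cc \<omega> R t)"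
  using cc_range[of R \<omega> t] by (simp add: qp_def cc_def)

lemma main_prob:
  assumes "finite T" "closed T"
  shows "measure (Om qp) (Ev T \<omega>0) = W T \<omega>0"
  using assms
proof (induction "card T" arbitrary: T rule: less_induct)
  case less
  interpret P: prob_space "Om qp" by (rule prob_space_Om)
  show ?case
  proof (cases "T = {}")
    case True
    then show ?thesis using P.prob_space by (simp add: Ev_def W_def)
  next
    case False
    then obtain R0 t0 where "(R0, t0) \<in> T" by auto
    then have R0: "R0 \<in> fst ` T" by force
    obtain R where R: "R \<in> fst ` T" and Rmax: "\<And>Q. (Q, R) \<in> (edges G)\<inverse> \<Longrightarrow> Q \<notin> fst ` T"
      by (rule wfE_min[OF wfE' R0]) blast
    then obtain t where Rt: "(R, t) \<in> T" by auto
    define T' where "T' = T - {(R, t)}"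
    have RS: "R \<in> Sig" "length t = length (ar R)"
      using closedD1[OF less.prems(2) Rt] closedD2[OF less.prems(2) Rt] by auto
    have cl': "closed T'"
      unfolding closed_def
    proof safe
      fix Q c assume "(Q, c) \<in> T'"
      then have Qc: "(Q, c) \<in> T" "(Q, c) \<noteq> (R, t)" by (auto simp: T'_def)
      then show "Q \<in> Sig" "length c = length (ar Q)"
        using closedD1[OF less.prems(2)] closedD2[OF less.prems(2)] by blast+
      fix P b assume d: "deps Q c P b"
      then have "(P, b) \<in> T" using closedD3[OF less.prems(2) Qc(1)] by blast
      moreover have "(P, b) \<noteq> (R, t)"
      proof
        assume "(P, b) = (R, t)"
        then have "(R, Q) \<in> edges G" using d by (simp add: deps_def)
        moreover have "Q \<in> fst ` T" using Qc(1) by (rule rev_image_eqI) simp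
        ultimately show False using Rmax[of Q] by simp
      qed
      ultimately show "(P, b) \<in> T'" by (simp add: T'_def)
    qed
    have fT': "finite T'" using less.prems(1) by (simp add: T'_def)
    have cardT': "card T' < card T" using less.prems(1) Rt unfolding T'_def by (rule card_Diff1_less)
    have IH: "measure (Om qp) (Ev T' \<omega>0) = W T' \<omega>0"
      using less.hyps[OF cardT' fT' cl'] .
    define v0 where "v0 = vec \<omega>0 R t"
    have deps_in: "(P, b) \<in> T'" if "deps R t P b" for P b
    proof -
      have "(P, b) \<in> T" using closedD3[OF less.prems(2) Rt that] .
      moreover have "P \<noteq> R"
      proof
        assume "P = R"
        then have "(R, R) \<in> edges G" using that by (simp add: deps_def)
        moreover have "acyclic (edges G)" using flbn unfolding is_flbn_def by (elim conjE)
        ultimately show False by (meson acyclic_def r_into_trancl')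
      qed
      ultimately show ?thesis by (auto simp: T'_def)
    qed
    have EvT: "Ev T \<omega>0 = Ev T' \<omega>0 \<inter> {x. x (R, t, v0) = \<omega>0 R t}"
    proof (intro equalityI subsetI)
      fix x assume x: "x \<in> Ev T \<omega>0"
      have 1: "x \<in> Ev T' \<omega>0"
        by (rule EvI, rule EvD[OF x]) (simp add: T'_def)
      have v: "vec (Phi x) R t = v0"
        unfolding v0_def
      proof (rule vec_agree[OF RS])
        fix P b assume "deps R t P b"
        then have "(P, b) \<in> T'" by (rule deps_in)
        then have "(P, b) \<in> T" by (simp add: T'_def)
        then show "Phi x P b = \<omega>0 P b" by (rule EvD[OF x])
      qed
      have "x (R, t, v0) = \<omega>0 R t"
        using Phi_v[OF RS v] EvD[OF x Rt] by simp
      then show "x \<in> Ev T' \<omega>0 \<inter> {x. x (R, t, v0) = \<omega>0 R t}" using 1 by simp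
    next
      fix x assume "x \<in> Ev T' \<omega>0 \<inter> {x. x (R, t, v0) = \<omega>0 R t}"
      then have x: "x \<in> Ev T' \<omega>0" "x (R, t, v0) = \<omega>0 R t" by auto
      have v: "vec (Phi x) R t = v0"
        unfolding v0_def
      proof (rule vec_agree[OF RS])
        fix P b assume "deps R t P b"
        then have "(P, b) \<in> T'" by (rule deps_in)
        then show "Phi x P b = \<omega>0 P b" by (rule EvD[OF x(1)])
      qed
      have "Phi x R t = \<omega>0 R t" using Phi_v[OF RS v] x(2) by simp
      show "x \<in> Ev T \<omega>0"
      proof (rule EvI)
        fix Q c assume "(Q, c) \<in> T"
        then show "Phi x Q c = \<omega>0 Q c"
          using \<open>Phi x R t = \<omega>0 R t\<close> EvD[OF x(1), of Q c] by (cases "(Q, c) = (R, t)") (auto simp: T'_def)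
      qed
    qed
    have "(R, t, v0) \<notin> JT T'" by (auto simp: JT_def T'_def)
    then have "measure (Om qp) (Ev T \<omega>0) = measure (Om qp) (Ev T' \<omega>0) * pmf (qp (R, t, v0)) (\<omega>0 R t)"
      unfolding EvT by (rule indep_single[OF finite_JT[OF fT'] Ev_dep[OF cl']])
    also have "\<dots> = W T' \<omega>0 * (if \<omega>0 R t then cc \<omega>0 R t else 1 - cc \<omega>0 R t)"
      using IH pmf_qp[OF RS(1)] by (simp add: v0_def)
    also have "\<dots> = W T \<omega>0"
    proof -
      have "W T \<omega>0 = (if \<omega>0 R t then cc \<omega>0 R t else 1 - cc \<omega>0 R t) * W T' \<omega>0"
        unfolding W_def T'_def by (subst prod.remove[OF less.prems(1) Rt]) simp
      then show ?thesis by (simp add: mult.commute)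
    qed
    finally show ?thesis .
  qed
qed

end


context qlbn
begin

definition Tn :: "('s \<Rightarrow> nat) \<Rightarrow> ('r \<times> nat list) set" where
  "Tn n = Sigma Sig (\<lambda>R. sorted_tuples n (ar R))"

definition TA :: "('s \<times> nat) set \<Rightarrow> ('r \<times> nat list) set" where
  "TA A = Sigma Sig (\<lambda>R. {t. tuple_in ar A R t})"

lemma finite_sorted_tuples: "finite (sorted_tuples n ss)"
proof -
  let ?M = "\<Sum>s\<in>set ss. n s"
  have "sorted_tuples n ss \<subseteq> {t. set t \<subseteq> {0..<?M} \<and> length t = length ss}"
  proof
    fix t assume t: "t \<in> sorted_tuples n ss"
    have "set t \<subseteq> {0..<?M}"
    proof
      fix a assume "a \<in> set t"
      then obtain j where j: "j < length t" "t ! j = a" by (auto simp: in_set_conv_nth)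
      have "a < n (ss ! j)" using t j by (auto simp: sorted_tuples_def)
      also have "n (ss ! j) \<le> ?M"
        using j t by (intro member_le_sum) (auto simp: sorted_tuples_def)
      finally show "a \<in> {0..<?M}" by simp
    qed
    then show "t \<in> {t. set t \<subseteq> {0..<?M} \<and> length t = length ss}"
      using t by (simp add: sorted_tuples_def)
  qed
  moreover have "finite {t. set t \<subseteq> {0..<?M} \<and> length t = length ss}"
    by (rule finite_lists_length_eq) simp
  ultimately show ?thesis by (rule finite_subset)
qed

lemma finite_Tn: "finite (Tn n)"
  unfolding Tn_def using finite_Sig finite_sorted_tuples by (rule finite_SigmaI)

lemma deps_edge: "deps R t P b \<Longrightarrow> (P, R) \<in> edges G"
  by (simp add: deps_def)

lemma deps_len: "deps R t P b \<Longrightarrow> length b = length (ar P)"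
  by (simp add: deps_def)

lemma deps_elem: "deps R t P b \<Longrightarrow> j < length b \<Longrightarrow> length t = length (ar R) \<Longrightarrow>
   \<exists>k<length (ar R). ar P ! j = ar R ! k \<and> b ! j = t ! k"
  unfolding deps_def set_zip by auto

lemma closed_Tn: "closed (Tn n)"
  unfolding closed_def
proof (intro ballI, clarify)
  fix R t assume Rt: "(R, t) \<in> Tn n"
  then have R: "R \<in> Sig" and t: "t \<in> sorted_tuples n (ar R)" by (auto simp: Tn_def)
  then have len: "length t = length (ar R)" by (simp add: sorted_tuples_def)
  have "(P, b) \<in> Tn n" if d: "deps R t P b" for P b
  proof -
    have P: "P \<in> Sig" using deps_edge[OF d] edges_sub by auto
    have "b \<in> sorted_tuples n (ar P)"
      unfolding sorted_tuples_def
    proof (intro CollectI conjI allI impI)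
      show "length b = length (ar P)" by (rule deps_len[OF d])
      fix j assume j: "j < length b"
      obtain k where k: "k < length (ar R)" "ar P ! j = ar R ! k" "b ! j = t ! k"
        using deps_elem[OF d j len] by blast
      have "t ! k < n (ar R ! k)" using t k(1) len by (simp add: sorted_tuples_def)
      then show "b ! j < n (ar P ! j)" using k by simp
    qed
    then show ?thesis using P by (simp add: Tn_def)
  qed
  then show "R \<in> Sig \<and> length t = length (ar R) \<and> (\<forall>P b. deps R t P b \<longrightarrow> (P, b) \<in> Tn n)"
    using R len by blast
qed

lemma closed_TA: "closed (TA A)"
  unfolding closed_def
proof (intro ballI, clarify)
  fix R t assume Rt: "(R, t) \<in> TA A"
  then have R: "R \<in> Sig" and t: "tuple_in ar A R t" by (auto simp: TA_def)
  then have len: "length t = length (ar R)" by (simp add: tuple_in_def)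
  have "(P, b) \<in> TA A" if d: "deps R t P b" for P b
  proof -
    have P: "P \<in> Sig" using deps_edge[OF d] edges_sub by auto
    have "tuple_in ar A P b"
      unfolding tuple_in_def
    proof (intro conjI allI impI)
      show "length b = length (ar P)" by (rule deps_len[OF d])
      fix j assume j: "j < length b"
      obtain k where k: "k < length (ar R)" "ar P ! j = ar R ! k" "b ! j = t ! k"
        using deps_elem[OF d j len] by blast
      have "(ar R ! k, t ! k) \<in> A" using t k(1) len by (simp add: tuple_in_def)
      then show "(ar P ! j, b ! j) \<in> A" using k by simp
    qed
    then show ?thesis using P by (simp add: TA_def)
  qed
  then show "R \<in> Sig \<and> length t = length (ar R) \<and> (\<forall>P b. deps R t P b \<longrightarrow> (P, b) \<in> TA A)"
    using R len by blast
qed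

lemma finite_TA: "finite A \<Longrightarrow> finite (TA A)"
proof -
  assume fA: "finite A"
  have "{t. tuple_in ar A R t} \<subseteq> {t. set t \<subseteq> snd ` A \<and> length t = length (ar R)}" for R
  proof
    fix t assume "t \<in> {t. tuple_in ar A R t}"
    then have t: "tuple_in ar A R t" by simp
    have "set t \<subseteq> snd ` A"
    proof
      fix a assume "a \<in> set t"
      then obtain j where j: "j < length t" "t ! j = a" by (auto simp: in_set_conv_nth)
      then have "(ar R ! j, a) \<in> A" using t by (auto simp: tuple_in_def)
      then show "a \<in> snd ` A" by (rule rev_image_eqI) simp
    qed
    then show "t \<in> {t. set t \<subseteq> snd ` A \<and> length t = length (ar R)}"
      using t by (simp add: tuple_in_def)
  qed
  moreover have "finite {t. set t \<subseteq> snd ` A \<and> length t = length (ar R)}" for R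
    using fA by (intro finite_lists_length_eq) simp
  ultimately have "finite {t. tuple_in ar A R t}" for R by (rule finite_subset)
  then show ?thesis unfolding TA_def using finite_Sig by (intro finite_SigmaI)
qed

lemma TA_sub: "in_domain n A \<Longrightarrow> TA A \<subseteq> Tn n"
proof
  fix x assume dom: "in_domain n A" and x: "x \<in> TA A"
  obtain R t where xe: "x = (R, t)" by (cases x)
  have R: "R \<in> Sig" and t: "tuple_in ar A R t" using x xe by (auto simp: TA_def)
  have "t \<in> sorted_tuples n (ar R)"
    unfolding sorted_tuples_def
  proof (intro CollectI conjI allI impI)
    show "length t = length (ar R)" using t by (simp add: tuple_in_def)
    fix j assume "j < length t"
    then have "(ar R ! j, t ! j) \<in> A" using t by (simp add: tuple_in_def)
    then show "t ! j < n (ar R ! j)" using dom unfolding in_domain_def by blast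
  qed
  then show "x \<in> Tn n" using R xe by (simp add: Tn_def)
qed

lemma sat_n: "qfree \<phi> \<Longrightarrow> sat n \<omega> \<rho> \<phi> = sat n' \<omega> \<rho> \<phi>"
  by (rule sat_qf_agree) auto

lemma sorted_tuples_Nil: "sorted_tuples n [] = {[]}"
  by (auto simp: sorted_tuples_def)

lemma Collect_Nil: "{b. b = [] \<and> P b} = (if P [] then {[]} else {})"
  by auto

lemma cond_prob_eq:
  assumes R: "R \<in> Sig"
  shows "cond_prob ar G n \<omega> R a = cc \<omega> R a"
proof -
  have "(\<lambda>i. if i < length (chis G R) then frac ar n \<omega> R a (chis G R ! i) else 0) = bv (vec \<omega> R a)"
  proof
    fix i
    show "(if i < length (chis G R) then frac ar n \<omega> R a (chis G R ! i) else 0) = bv (vec \<omega> R a) i"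
    proof (cases "i < length (chis G R)")
      case True
      let ?c = "chis G R ! i"
      have c: "?c \<in> set (chis G R)" using True by simp
      note cp = chi_props[OF R c]
      have f: "fst ?c = []" using cp by simp
      have "frac ar n \<omega> R a ?c = (if sat n \<omega> (env_of (xvars ar R) a) (snd ?c) then 1 else 0)"
        unfolding frac_def Let_def f by (simp add: sorted_tuples_Nil Collect_Nil)
      also have "sat n \<omega> (env_of (xvars ar R) a) (snd ?c) = sat (\<lambda>_. 0) \<omega> (env_of (xvars ar R) a) (snd ?c)"
        by (rule sat_n) (use cp in simp)
      finally show ?thesis using True by (simp add: bv_def vec_def)
    next
      case False
      then show ?thesis by (simp add: bv_def)
    qed
  qed
  then show ?thesis by (simp add: cond_prob_def cc_def)
qed

lemma weight_eq: "weight Sig ar G n \<omega> = W (Tn n) \<omega>"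
proof -
  have "weight Sig ar G n \<omega> = (\<Prod>R\<in>Sig. \<Prod>a\<in>sorted_tuples n (ar R).
        if \<omega> R a then cc \<omega> R a else 1 - cc \<omega> R a)"
    unfolding weight_def by (intro prod.cong refl) (simp add: cond_prob_eq)
  also have "\<dots> = W (Tn n) \<omega>"
    unfolding W_def Tn_def by (rule prod.Sigma) (use finite_Sig finite_sorted_tuples in auto)
  finally show ?thesis .
qed

lemma fin_structs_eq: "fin_structs Sig ar n = {\<omega>. \<forall>R t. \<omega> R t \<longrightarrow> (R, t) \<in> Tn n}"
  by (simp add: fin_structs_def Tn_def)

lemma finite_fin_structs: "finite (fin_structs Sig ar n)"
proof -
  have "fin_structs Sig ar n \<subseteq> (\<lambda>X R t. (R, t) \<in> X) ` Pow (Tn n)"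
  proof
    fix \<omega> assume "\<omega> \<in> fin_structs Sig ar n"
    then have w: "\<forall>R t. \<omega> R t \<longrightarrow> (R, t) \<in> Tn n" by (simp add: fin_structs_eq)
    show "\<omega> \<in> (\<lambda>X R t. (R, t) \<in> X) ` Pow (Tn n)"
      by (rule image_eqI[of _ _ "{(R, t). \<omega> R t}"]) (use w in auto)
  qed
  moreover have "finite ((\<lambda>X R t. (R, t) \<in> X) ` Pow (Tn n))"
    using finite_Tn by simp
  ultimately show ?thesis by (rule finite_subset)
qed

lemma agrees_TA: "agrees_on Sig ar A Y \<omega> \<longleftrightarrow> (\<forall>(R, t)\<in>TA A. \<omega> R t = Y R t)"
  unfolding agrees_on_def TA_def by blast

lemma Ev_sets: "finite T \<Longrightarrow> closed T \<Longrightarrow> Ev T \<omega> \<in> sets (Om qp)"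
  by (rule dep_sets[OF finite_JT Ev_dep])

lemma Ev_Tn_disj: "disjoint_family_on (\<lambda>\<omega>. Ev (Tn n) \<omega>) (fin_structs Sig ar n)"
  unfolding disjoint_family_on_def
proof (intro ballI impI)
  fix \<omega> \<omega>' assume w: "\<omega> \<in> fin_structs Sig ar n" "\<omega>' \<in> fin_structs Sig ar n" "\<omega> \<noteq> \<omega>'"
  have "\<exists>R t. \<omega> R t \<noteq> \<omega>' R t"
  proof (rule ccontr)
    assume "\<not> (\<exists>R t. \<omega> R t \<noteq> \<omega>' R t)"
    then have "\<omega> = \<omega>'" by (intro ext) blast
    with w(3) show False by simp
  qed
  then obtain R t where ne: "\<omega> R t \<noteq> \<omega>' R t" by blast
  then have "\<omega> R t \<or> \<omega>' R t" by blast
  then have Rt: "(R, t) \<in> Tn n" using w(1,2) unfolding fin_structs_eq by blast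
  show "Ev (Tn n) \<omega> \<inter> Ev (Tn n) \<omega>' = {}"
  proof (rule ccontr)
    assume "Ev (Tn n) \<omega> \<inter> Ev (Tn n) \<omega>' \<noteq> {}"
    then obtain x where x: "x \<in> Ev (Tn n) \<omega>" "x \<in> Ev (Tn n) \<omega>'" by blast
    have "Phi x R t = \<omega> R t" by (rule EvD[OF x(1) Rt])
    moreover have "Phi x R t = \<omega>' R t" by (rule EvD[OF x(2) Rt])
    ultimately show False using ne by simp
  qed
qed

lemma sum_Ev:
  assumes fS: "finite S" and sub: "S \<subseteq> fin_structs Sig ar n"
  shows "(\<Sum>\<omega>\<in>S. measure (Om qp) (Ev (Tn n) \<omega>)) = measure (Om qp) (\<Union>\<omega>\<in>S. Ev (Tn n) \<omega>)"
proof -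
  interpret P: prob_space "Om qp" by (rule prob_space_Om)
  have "measure (Om qp) (\<Union>\<omega>\<in>S. Ev (Tn n) \<omega>) = (\<Sum>\<omega>\<in>S. measure (Om qp) (Ev (Tn n) \<omega>))"
  proof (rule P.finite_measure_finite_Union)
    show "finite S" by (rule fS)
    show "(\<lambda>\<omega>. Ev (Tn n) \<omega>) ` S \<subseteq> sets (Om qp)"
    proof (rule image_subsetI)
      fix \<omega> show "Ev (Tn n) \<omega> \<in> sets (Om qp)" by (rule Ev_sets[OF finite_Tn closed_Tn])
    qed
    show "disjoint_family_on (\<lambda>\<omega>. Ev (Tn n) \<omega>) S"
      by (rule disjoint_family_on_mono[OF sub Ev_Tn_disj])
  qed
  then show ?thesis by simp
qed

lemma prob_n_eq:
  assumes fA: "finite A" and dom: "in_domain n A"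
  shows "prob_n Sig ar G n A Y = measure (Om qp) (Ev (TA A) Y)"
proof -
  interpret P: prob_space "Om qp" by (rule prob_space_Om)
  let ?S = "{\<omega> \<in> fin_structs Sig ar n. agrees_on Sig ar A Y \<omega>}"
  have fS: "finite ?S" using finite_fin_structs by simp
  have sub: "TA A \<subseteq> Tn n" by (rule TA_sub[OF dom])
  have "prob_n Sig ar G n A Y = (\<Sum>\<omega>\<in>?S. measure (Om qp) (Ev (Tn n) \<omega>))"
    unfolding prob_n_def weight_eq using main_prob[OF finite_Tn closed_Tn] by simp
  also have "\<dots> = measure (Om qp) (\<Union>\<omega>\<in>?S. Ev (Tn n) \<omega>)"
    by (rule sum_Ev[OF fS]) blast
  also have "(\<Union>\<omega>\<in>?S. Ev (Tn n) \<omega>) = Ev (TA A) Y"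
  proof (intro equalityI subsetI)
    fix x assume "x \<in> (\<Union>\<omega>\<in>?S. Ev (Tn n) \<omega>)"
    then obtain \<omega> where w: "\<omega> \<in> ?S" "x \<in> Ev (Tn n) \<omega>" by blast
    show "x \<in> Ev (TA A) Y"
    proof (rule EvI)
      fix R t assume Rt: "(R, t) \<in> TA A"
      have "(R, t) \<in> Tn n" using Rt sub by blast
      then have "Phi x R t = \<omega> R t" by (rule EvD[OF w(2)])
      also have "\<omega> R t = Y R t"
      proof -
        have ag: "agrees_on Sig ar A Y \<omega>" using w(1) by simp
        show ?thesis using bspec[OF agrees_TA[THEN iffD1, OF ag] Rt] by simp
      qed
      finally show "Phi x R t = Y R t" .
    qed
  next
    fix x assume x: "x \<in> Ev (TA A) Y"
    define \<omega> where "\<omega> = (\<lambda>R t. (R, t) \<in> Tn n \<and> Phi x R t)"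
    have "\<omega> \<in> fin_structs Sig ar n" by (simp add: fin_structs_eq \<omega>_def)
    moreover have "agrees_on Sig ar A Y \<omega>"
      unfolding agrees_TA
    proof (intro ballI, clarify)
      fix R t assume Rt: "(R, t) \<in> TA A"
      have "(R, t) \<in> Tn n" using Rt sub by blast
      then show "\<omega> R t = Y R t" using EvD[OF x Rt] by (simp add: \<omega>_def)
    qed
    moreover have "x \<in> Ev (Tn n) \<omega>"
      by (rule EvI) (simp add: \<omega>_def)
    ultimately show "x \<in> (\<Union>\<omega>\<in>?S. Ev (Tn n) \<omega>)" by blast
  qed
  finally show ?thesis .
qed

lemma Phi_Omega: "Phi x \<in> Omega_inf Sig ar"
  unfolding Omega_inf_def using Phi_eq[of x] by blast

lemma gen_sets_Pow: "gen_sets Sig ar \<subseteq> Pow (Omega_inf Sig ar)"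
  unfolding gen_sets_def gen_set_def by blast

lemma Phi_preimage: "Phi -` gen_set Sig ar A Y \<inter> space (Om qp) = Ev (TA A) Y"
  unfolding gen_set_def Ev_def using Phi_Omega agrees_TA by auto

lemma Phi_meas: "Phi \<in> measurable (Om qp) (sigma (Omega_inf Sig ar) (gen_sets Sig ar))"
proof (rule measurable_measure_of[OF gen_sets_Pow])
  show "Phi \<in> space (Om qp) \<rightarrow> Omega_inf Sig ar" using Phi_Omega by blast
  fix y assume "y \<in> gen_sets Sig ar"
  then obtain A Y where y: "y = gen_set Sig ar A Y" "finite A" by (auto simp: gen_sets_def)
  show "Phi -` y \<inter> space (Om qp) \<in> sets (Om qp)"
    unfolding y(1) Phi_preimage by (rule Ev_sets[OF finite_TA[OF y(2)] closed_TA])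
qed

lemma eventually_dom:
  fixes seq :: "nat \<Rightarrow> 's \<Rightarrow> nat"
  assumes inc: "\<forall>s. incseq (\<lambda>k. seq k s)" and unb: "\<forall>s. \<forall>B. \<exists>k. B \<le> seq k s"
    and fA: "finite A"
  shows "\<exists>K. \<forall>k\<ge>K. in_domain (seq k) A"
  using fA
proof (induction A rule: finite_induct)
  case empty
  then show ?case by (simp add: in_domain_def)
next
  case (insert x A)
  then obtain K1 where K1: "\<forall>k\<ge>K1. in_domain (seq k) A" by blast
  obtain s a where x: "x = (s, a)" by (cases x)
  obtain k2 where k2: "Suc a \<le> seq k2 s" using unb by blast
  have "in_domain (seq k) (insert x A)" if k: "k \<ge> max K1 k2" for k
  proof -
    have "seq k2 s \<le> seq k s" using inc k by (simp add: incseq_def)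
    then have "a < seq k s" using k2 by simp
    moreover have "in_domain (seq k) A" using K1 k by simp
    ultimately show ?thesis unfolding in_domain_def x by auto
  qed
  then show ?case by blast
qed

end

theorem proposition2:
  fixes Sig :: "'r set" and ar :: "'r \<Rightarrow> 's list" and G :: "('s, 'r) flbn"
  assumes "is_qf_lbn Sig ar G"
  shows "projective Sig ar G \<and> (\<exists>M. is_asymptotic_limit Sig ar G M)"
proof -
  interpret Q: qlbn Sig ar G by unfold_locales (rule assms)
  interpret P: prob_space "Om Q.qp" by (rule prob_space_Om)
  have proj: "projective Sig ar G"
    unfolding projective_def
  proof (intro allI impI)
    fix A Y and n n' :: "'s \<Rightarrow> nat"
    assume "finite A" "in_domain n A" "in_domain n' A"
    then show "prob_n Sig ar G n A Y = prob_n Sig ar G n' A Y"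
      using Q.prob_n_eq by simp
  qed
  define N where "N = sigma (Omega_inf Sig ar) (gen_sets Sig ar)"
  define M where "M = distr (Om Q.qp) N Q.Phi"
  have meas: "Q.Phi \<in> measurable (Om Q.qp) N" unfolding N_def by (rule Q.Phi_meas)
  have "is_asymptotic_limit Sig ar G M"
    unfolding is_asymptotic_limit_def
  proof (intro conjI allI impI)
    show "prob_space M" unfolding M_def by (rule P.prob_space_distr[OF meas])
    show "space M = Omega_inf Sig ar" unfolding M_def N_def by (simp add: space_measure_of_conv)
    show "sets M = sigma_sets (Omega_inf Sig ar) (gen_sets Sig ar)"
      unfolding M_def N_def using Q.gen_sets_Pow by simp
    fix seq :: "nat \<Rightarrow> 's \<Rightarrow> nat" and A :: "('s \<times> nat) set" and Y :: "'r \<Rightarrow> nat list \<Rightarrow> bool"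
    assume inc: "\<forall>s. incseq (\<lambda>k. seq k s)" and unb: "\<forall>s. \<forall>B. \<exists>k. B \<le> seq k s" and fA: "finite A"
    obtain K where K: "\<forall>k\<ge>K. in_domain (seq k) A" using Q.eventually_dom[OF inc unb fA] by blast
    have gs: "gen_set Sig ar A Y \<in> sets N"
      unfolding N_def using Q.gen_sets_Pow fA by (auto simp: gen_sets_def)
    have mM: "measure M (gen_set Sig ar A Y) = measure (Om Q.qp) (Q.Ev (Q.TA A) Y)"
      unfolding M_def using measure_distr[OF meas gs] Q.Phi_preimage by simp
    have "\<forall>\<^sub>F k in sequentially. prob_n Sig ar G (seq k) A Y = measure M (gen_set Sig ar A Y)"
      unfolding eventually_sequentially mM using K Q.prob_n_eq[OF fA] by blast
    then show "(\<lambda>k. prob_n Sig ar G (seq k) A Y) \<longlonglongrightarrow> measure M (gen_set Sig ar A Y)"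
      by (rule tendsto_eventually)
  qed
  with proj show ?thesis by blast
qed

end
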